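(* Let $R$ be a commutative ring, $I=(f_1,\dots,f_r)$, $\mathfrak a=(a_1,\dots,a_s)\subseteq I$, $g=\operatorname{grade}(I)$, and $\Phi=(c_{ij})$ an $r\times s$ matrix with $a_j=\sum_i c_{ij}f_i$. With $\Gamma_\bullet$ and $\tilde H_\bullet$ as in the context, $$\operatorname{Kitt}(\mathfrak a,I)=\mathfrak a+\langle\Gamma_\bullet\cdot\tilde H_\bullet\rangle_r=\mathfrak a+\sum_{i=\max\{0,r-s\}}^{r-g}\Gamma_{r-i}\cdot\tilde H_i .$$
   Context: $K_\bullet=K_\bullet(\mathbf f;R)$ is the Koszul DG algebra: exterior algebra over $R$ on $e_1,\dots,e_r$ with $\partial(e_i)=f_i$. Set $\zeta_j=\sum_i c_{ij}e_i$, let $\Gamma_\bullet$ be the $R$-subalgebra generated by $\zeta_1,\dots,\zeta_s$ and $Z_\bullet$ the subalgebra of Koszul cycles. $\tilde H_\bullet$ is the $R$-subalgebra of $K_\bullet$ generated by (cycle) representatives of the Koszul homology classes of $H_\bullet(\mathbf f;R)$, $\tilde H_i$ its degree-$i$ part. For graded subsets $A_\bullet,B_\bullet$ of $K_\bullet$, $\langle A_\bullet\cdot B_\bullet\rangle_r$ (resp. $A_j\cdot B_{r-j}$) is the $R$-span in $K_r$ of products $x\wedge y$ with $x\in A_j, y\in B_{r-j}$ (all $j$, resp. fixed $j$), identified with an ideal of $R$ via $K_r=Re_1\wedge\cdots\wedge e_r\cong R$. $\operatorname{Kitt}(\mathfrak a,I):=\langle\Gamma_\bullet\cdot Z_\bullet\rangle_r$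 (this ideal does not depend on the choice of generators or of $\Phi$). *)

theory Defs
  imports Main "HOL-Library.Extended_Nat"
begin

text \<open>An element of the exterior algebra on e_0,...,e_{r-1} is represented by its coefficient
  function on index sets S (standing for e_S = wedge of e_i, i in S, in increasing order).\<close>

type_synonym 'a kelt = "nat set \<Rightarrow> 'a"

definition kelem :: "nat \<Rightarrow> ('a::comm_ring_1) kelt set" where
  "kelem r = {x. \<forall>S. x S \<noteq> 0 \<longrightarrow> S \<subseteq> {0..<r}}"

definition kdeg :: "nat \<Rightarrow> nat \<Rightarrow> ('a::comm_ring_1) kelt set" where
  "kdeg r i = {x \<in> kelem r. \<forall>S. x S \<noteq> 0 \<longrightarrow> card S = i}"

text \<open>Sign of e_S wedge e_T for disjoint S, T.\<close>
definition ksign :: "nat set \<Rightarrow> nat set \<Rightarrow> 'a::comm_ring_1" where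
  "ksign S T = (-1) ^ card {(i, j). i \<in> S \<and> j \<in> T \<and> j < i}"

definition wedge :: "('a::comm_ring_1) kelt \<Rightarrow> 'a kelt \<Rightarrow> 'a kelt" where
  "wedge x y = (\<lambda>U. \<Sum>S\<in>Pow U. ksign S (U - S) * x S * y (U - S))"

text \<open>Koszul differential: d(e_i) = f_i.\<close>
definition kd :: "nat \<Rightarrow> (nat \<Rightarrow> 'a::comm_ring_1) \<Rightarrow> 'a kelt \<Rightarrow> 'a kelt" where
  "kd r f x = (\<lambda>T. \<Sum>i\<in>{0..<r} - T. (-1) ^ card {j\<in>T. j < i} * f i * x (insert i T))"

definition kcycles :: "nat \<Rightarrow> (nat \<Rightarrow> 'a::comm_ring_1) \<Rightarrow> 'a kelt set" where
  "kcycles r f = {x \<in> kelem r. kd r f x = (\<lambda>_. 0)}"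

definition kbound :: "nat \<Rightarrow> (nat \<Rightarrow> 'a::comm_ring_1) \<Rightarrow> nat \<Rightarrow> 'a kelt set" where
  "kbound r f i = {kd r f w | w. w \<in> kdeg r (Suc i)}"

inductive_set subalg :: "('a::comm_ring_1) kelt set \<Rightarrow> 'a kelt set" for G where
  gen: "g \<in> G \<Longrightarrow> g \<in> subalg G"
| scalar: "(\<lambda>U. if U = {} then c else 0) \<in> subalg G"
| add: "x \<in> subalg G \<Longrightarrow> y \<in> subalg G \<Longrightarrow> (\<lambda>U. x U + y U) \<in> subalg G"
| smult: "x \<in> subalg G \<Longrightarrow> (\<lambda>U. c * x U) \<in> subalg G"
| mult: "x \<in> subalg G \<Longrightarrow> y \<in> subalg G \<Longrightarrow> wedge x y \<in> subalg G"

definition zeta :: "nat \<Rightarrow> (nat \<Rightarrow> nat \<Rightarrow> 'a::comm_ring_1) \<Rightarrow> nat \<Rightarrow> 'a kelt" where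
  "zeta r c j = (\<lambda>U. \<Sum>i<r. if U = {i} then c i j else 0)"

definition Gamma :: "nat \<Rightarrow> nat \<Rightarrow> (nat \<Rightarrow> nat \<Rightarrow> 'a::comm_ring_1) \<Rightarrow> 'a kelt set" where
  "Gamma r s c = subalg (zeta r c ` {..<s})"

definition koszul_reps ::
  "nat \<Rightarrow> (nat \<Rightarrow> 'a::comm_ring_1) \<Rightarrow> (nat \<Rightarrow> 'a kelt \<Rightarrow> 'a kelt) \<Rightarrow> bool" where
  "koszul_reps r f rep \<longleftrightarrow>
     (\<forall>i z. z \<in> kdeg r i \<inter> kcycles r f \<longrightarrow>
        rep i z \<in> kdeg r i \<inter> kcycles r f \<and>
        (\<lambda>U. z U - rep i z U) \<in> kbound r f i \<and>
        (\<forall>z'. z' \<in> kdeg r i \<inter> kcycles r f \<and> (\<lambda>U. z U - z' U) \<in> kbound r f i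
              \<longrightarrow> rep i z' = rep i z))"

definition Htilde :: "nat \<Rightarrow> (nat \<Rightarrow> 'a::comm_ring_1) \<Rightarrow> (nat \<Rightarrow> 'a kelt \<Rightarrow> 'a kelt) \<Rightarrow> 'a kelt set" where
  "Htilde r f rep = subalg {rep i z | i z. z \<in> kdeg r i \<inter> kcycles r f}"

definition kspan :: "('a::comm_ring_1) kelt set \<Rightarrow> 'a kelt set" where
  "kspan X = {(\<lambda>U. \<Sum>x\<in>F. k x * x U) | F k. finite F \<and> F \<subseteq> X}"

definition rspan :: "('a::comm_ring_1) set \<Rightarrow> 'a set" where
  "rspan X = {(\<Sum>x\<in>F. k x * x) | F k. finite F \<and> F \<subseteq> X}"

definition ideal_sum :: "('a::comm_ring_1) set set \<Rightarrow> 'a set" where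
  "ideal_sum \<I> = rspan (\<Union>\<I>)"

text \<open>\<langle>A\<cdot>B\<rangle>_r: span in K_r of all x \<and> y, x \<in> A_j, y \<in> B_{r-j}, identified with an
  ideal of R via K_r = R e_0\<and>...\<and>e_{r-1} (i.e. taking the coefficient at {0..<r}).\<close>
definition top_ideal :: "nat \<Rightarrow> ('a::comm_ring_1) kelt set \<Rightarrow> 'a kelt set \<Rightarrow> 'a set" where
  "top_ideal r A B = (\<lambda>z. z {0..<r}) `
     kspan {wedge x y | x y j. j \<le> r \<and> x \<in> A \<inter> kdeg r j \<and> y \<in> B \<inter> kdeg r (r - j)}"

definition top_ideal_deg :: "nat \<Rightarrow> ('a::comm_ring_1) kelt set \<Rightarrow> 'a kelt set \<Rightarrow> nat \<Rightarrow> 'a set" where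
  "top_ideal_deg r A B j = (\<lambda>z. z {0..<r}) `
     kspan {wedge x y | x y. x \<in> A \<inter> kdeg r j \<and> y \<in> B \<inter> kdeg r (r - j)}"

definition kitt :: "nat \<Rightarrow> nat \<Rightarrow> (nat \<Rightarrow> nat \<Rightarrow> 'a::comm_ring_1) \<Rightarrow> (nat \<Rightarrow> 'a) \<Rightarrow> 'a set" where
  "kitt r s c f = top_ideal r (Gamma r s c) (kcycles r f)"

definition koszul_H_nonzero :: "nat \<Rightarrow> (nat \<Rightarrow> 'a::comm_ring_1) \<Rightarrow> nat \<Rightarrow> bool" where
  "koszul_H_nonzero r f i \<longleftrightarrow> (\<exists>z \<in> kdeg r i \<inter> kcycles r f. z \<notin> kbound r f i)"

definition kgrade :: "nat \<Rightarrow> (nat \<Rightarrow> 'a::comm_ring_1) \<Rightarrow> enat" where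
  "kgrade r f = (if \<exists>i\<le>r. koszul_H_nonzero r f i
                 then enat (r - Max {i. i \<le> r \<and> koszul_H_nonzero r f i}) else \<infinity>)"

end

theory Submission
  imports Defs "HOL-Library.Disjoint_Sets"
begin

definition ninv :: "nat set \<Rightarrow> nat set \<Rightarrow> nat" where
  "ninv S T = card {(i, j). i \<in> S \<and> j \<in> T \<and> j < i}"

definition nlt :: "nat set \<Rightarrow> nat \<Rightarrow> nat" where
  "nlt T i = card {j\<in>T. j < i}"

definition ngt :: "nat set \<Rightarrow> nat \<Rightarrow> nat" where
  "ngt T i = card {j\<in>T. i < j}"

lemma ksign_ninv: "ksign S T = (-1) ^ ninv S T"
  by (simp add: ksign_def ninv_def)

lemma m1_parity: "even m = even n \<Longrightarrow> (-1::'a::comm_ring_1) ^ m = (-1) ^ n"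
  by (metis minus_one_power_iff)

lemma fin_ninv: "finite (S::nat set) \<Longrightarrow> finite {(i, j). i \<in> S \<and> j \<in> T \<and> j < i}"
proof -
  assume "finite S"
  have "{(i, j). i \<in> S \<and> j \<in> T \<and> j < i} \<subseteq> S \<times> {..<Max (insert 0 S)}"
    using \<open>finite S\<close> by (auto intro: order.strict_trans2[OF _ Max_ge])
  then show ?thesis using \<open>finite S\<close> finite_subset by blast
qed

lemma ninv_Un_left:
  assumes "finite A" "finite B" "A \<inter> B = {}"
  shows "ninv (A \<union> B) C = ninv A C + ninv B C"
proof -
  have "{(i, j). i \<in> A \<union> B \<and> j \<in> C \<and> j < i} =
        {(i, j). i \<in> A \<and> j \<in> C \<and> j < i} \<union> {(i, j). i \<in> B \<and> j \<in> C \<and> j < i}" by auto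
  then show ?thesis unfolding ninv_def
    using assms by (simp add: card_Un_disjoint fin_ninv, subst card_Un_disjoint, auto simp: fin_ninv)
qed

lemma ninv_Un_right:
  assumes "finite A" "B \<inter> C = {}"
  shows "ninv A (B \<union> C) = ninv A B + ninv A C"
proof -
  have "{(i, j). i \<in> A \<and> j \<in> B \<union> C \<and> j < i} =
        {(i, j). i \<in> A \<and> j \<in> B \<and> j < i} \<union> {(i, j). i \<in> A \<and> j \<in> C \<and> j < i}" by auto
  then show ?thesis unfolding ninv_def
    using assms by (subst card_Un_disjoint[symmetric], auto simp: fin_ninv)
qed

lemma ninv_single_left: "ninv {a} T = nlt T a"
proof -
  have "{(i, j). i \<in> {a} \<and> j \<in> T \<and> j < i} = (\<lambda>j. (a, j)) ` {j\<in>T. j < a}" by auto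
  then show ?thesis unfolding ninv_def nlt_def by (simp add: card_image inj_on_def)
qed

lemma ninv_single_right: "finite S \<Longrightarrow> ninv S {b} = ngt S b"
proof -
  have "{(i, j). i \<in> S \<and> j \<in> {b} \<and> j < i} = (\<lambda>i. (i, b)) ` {i\<in>S. b < i}" by auto
  then show ?thesis unfolding ninv_def ngt_def by (simp add: card_image inj_on_def)
qed

lemma ninv_empty_left[simp]: "ninv {} T = 0" by (simp add: ninv_def)
lemma ninv_empty_right[simp]: "ninv S {} = 0" by (simp add: ninv_def)

lemma ninv_insert_left: "finite S \<Longrightarrow> a \<notin> S \<Longrightarrow> ninv (insert a S) T = ninv S T + nlt T a"
  using ninv_Un_left[of "{a}" S T] ninv_single_left[of a T] by simp

lemma ninv_insert_right: "finite S \<Longrightarrow> b \<notin> T \<Longrightarrow> ninv S (insert b T) = ninv S T + ngt S b"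
  using ninv_Un_right[of S "{b}" T] ninv_single_right[of S b] by simp

lemma nlt_split: "S \<subseteq> T \<Longrightarrow> nlt T i = nlt S i + nlt (T - S) i"
proof -
  assume "S \<subseteq> T"
  have "{j\<in>T. j < i} = {j\<in>S. j < i} \<union> {j\<in>T - S. j < i}" using \<open>S \<subseteq> T\<close> by auto
  moreover have "finite {j\<in>S. j < i}" "finite {j\<in>T - S. j < i}" by auto
  ultimately show ?thesis unfolding nlt_def by (simp add: card_Un_disjoint disjoint_iff)
qed

lemma nlt_ngt: "finite S \<Longrightarrow> i \<notin> S \<Longrightarrow> nlt S i + ngt S i = card S"
proof -
  assume "finite S" "i \<notin> S"
  have "S = {j\<in>S. j < i} \<union> {j\<in>S. i < j}" using \<open>i \<notin> S\<close> by (auto simp: not_less_iff_gr_or_eq)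
  then have "card S = card ({j\<in>S. j < i} \<union> {j\<in>S. i < j})" by simp
  also have "\<dots> = nlt S i + ngt S i" unfolding nlt_def ngt_def
    using \<open>finite S\<close> by (subst card_Un_disjoint) auto
  finally show ?thesis by simp
qed

lemma nlt_insert: "k \<notin> T \<Longrightarrow> nlt (insert k T) i = nlt T i + (if k < i then 1 else 0)"
proof -
  assume "k \<notin> T"
  show ?thesis
  proof (cases "k < i")
    case True
    then have "{j\<in>insert k T. j < i} = insert k {j\<in>T. j < i}" by auto
    then show ?thesis unfolding nlt_def using True \<open>k \<notin> T\<close> by simp
  next
    case False
    then have "{j\<in>insert k T. j < i} = {j\<in>T. j < i}" by auto
    then show ?thesis unfolding nlt_def using False by simp
  qed
qed


definition sc :: "'a::comm_ring_1 \<Rightarrow> 'a kelt" where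
  "sc c = (\<lambda>U. if U = {} then c else 0)"

definition kinv :: "('a::comm_ring_1) kelt \<Rightarrow> 'a kelt" where
  "kinv x = (\<lambda>U. (-1) ^ card U * x U)"

definition fs :: "('a::comm_ring_1) kelt \<Rightarrow> bool" where
  "fs x \<longleftrightarrow> (\<forall>U. infinite U \<longrightarrow> x U = 0)"

lemma wedge_infinite: "infinite U \<Longrightarrow> wedge x y U = 0"
  by (simp add: wedge_def)

lemma fs_wedge: "fs (wedge x y)"
  by (simp add: fs_def wedge_infinite)

lemma wedge_add_left: "wedge (\<lambda>U. x U + x' U) y = (\<lambda>U. wedge x y U + wedge x' y U)"
  by (simp add: wedge_def algebra_simps sum.distrib)

lemma wedge_add_right: "wedge x (\<lambda>U. y U + y' U) = (\<lambda>U. wedge x y U + wedge x y' U)"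
  by (simp add: wedge_def algebra_simps sum.distrib)

lemma wedge_smult_left: "wedge (\<lambda>U. c * x U) y = (\<lambda>U. c * wedge x y U)"
  by (simp add: wedge_def algebra_simps sum_distrib_left)

lemma wedge_smult_right: "wedge x (\<lambda>U. c * y U) = (\<lambda>U. c * wedge x y U)"
  by (simp add: wedge_def algebra_simps sum_distrib_left)

lemma wedge_neg_left: "wedge (\<lambda>U. - x U) y = (\<lambda>U. - wedge x y U)"
  by (simp add: wedge_def sum_negf)

lemma wedge_zero_left[simp]: "wedge (\<lambda>_. 0) y = (\<lambda>_. 0)"
  by (simp add: wedge_def)

lemma wedge_zero_right[simp]: "wedge x (\<lambda>_. 0) = (\<lambda>_. 0)"
  by (simp add: wedge_def)

lemma wedge_sum_left:
  "wedge (\<lambda>U. \<Sum>p\<in>F. k p * g p U) y = (\<lambda>U. \<Sum>p\<in>F. k p * wedge (g p) y U)"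
  unfolding wedge_def
  by (rule ext, simp add: sum_distrib_left sum_distrib_right mult_ac, rule sum.swap)

lemma wedge_sum_right:
  "wedge x (\<lambda>U. \<Sum>p\<in>F. k p * g p U) = (\<lambda>U. \<Sum>p\<in>F. k p * wedge x (g p) U)"
  unfolding wedge_def
  by (rule ext, simp add: sum_distrib_left sum_distrib_right mult_ac, rule sum.swap)

lemma wedge_sc_left: "fs y \<Longrightarrow> wedge (sc c) y = (\<lambda>U. c * y U)"
proof (rule ext)
  fix U assume "fs y"
  show "wedge (sc c) y U = c * y U"
  proof (cases "finite U")
    case True
    have "wedge (sc c) y U = (\<Sum>S\<in>Pow U. if S = {} then ksign S (U - S) * c * y (U - S) else 0)"
      unfolding wedge_def sc_def by (rule sum.cong) auto
    also have "\<dots> = ksign {} U * c * y U" by (subst sum.delta) (use True in auto)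
    finally show ?thesis by (simp add: ksign_def)
  next
    case False
    then show ?thesis using \<open>fs y\<close> by (simp add: fs_def wedge_infinite)
  qed
qed

lemma wedge_sc_right: "fs x \<Longrightarrow> wedge x (sc c) = (\<lambda>U. c * x U)"
proof (rule ext)
  fix U assume "fs x"
  show "wedge x (sc c) U = c * x U"
  proof (cases "finite U")
    case True
    have "wedge x (sc c) U = (\<Sum>S\<in>Pow U. if S = U then ksign S (U - S) * x S * c else 0)"
      unfolding wedge_def sc_def by (rule sum.cong) auto
    also have "\<dots> = ksign U {} * x U * c" by (subst sum.delta) (use True in auto)
    finally show ?thesis by (simp add: ksign_def mult_ac)
  next
    case False
    then show ?thesis using \<open>fs x\<close> by (simp add: fs_def wedge_infinite)
  qed
qed

lemma fs_sc: "fs (sc c)" by (auto simp: fs_def sc_def)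

lemma wedge_assoc: "wedge (wedge x y) z = wedge x (wedge y z)"
proof (rule ext)
  fix U
  show "wedge (wedge x y) z U = wedge x (wedge y z) U"
  proof (cases "finite U")
    case False then show ?thesis by (simp add: wedge_infinite)
  next
    case fin: True
    define h1 where "h1 = (\<lambda>(S, A). ksign S (U - S) * ksign A (S - A) * x A * y (S - A) * z (U - S))"
    define h2 where "h2 = (\<lambda>(A, B). ksign A (U - A) * ksign B (U - A - B) * x A * y B * z (U - A - B))"
    have "wedge (wedge x y) z U = (\<Sum>S\<in>Pow U. \<Sum>A\<in>Pow S. h1 (S, A))"
      unfolding wedge_def h1_def by (simp add: sum_distrib_left sum_distrib_right mult_ac)
    also have "\<dots> = (\<Sum>p\<in>Sigma (Pow U) Pow. h1 p)"
      using fin by (subst sum.Sigma) (auto intro: finite_subset)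
    also have "\<dots> = (\<Sum>p\<in>Sigma (Pow U) (\<lambda>A. Pow (U - A)). h2 p)"
    proof (rule sym, rule sum.reindex_bij_witness[where j = "\<lambda>(A, B). (A \<union> B, A)" and i = "\<lambda>(S, A). (A, S - A)"])
      fix p assume "p \<in> Sigma (Pow U) (\<lambda>A. Pow (U - A))"
      then obtain A B where p: "p = (A, B)" "A \<subseteq> U" "B \<subseteq> U - A" by auto
      have fA: "finite A" "finite B" "finite (U - A - B)" using p fin by (auto intro: finite_subset)
      have e1: "U - (A \<union> B) = U - A - B" "(A \<union> B) - A = B" using p by auto
      have e2: "U - A = B \<union> (U - A - B)" using p by auto
      have "ninv (A \<union> B) (U - A - B) = ninv A (U - A - B) + ninv B (U - A - B)"
        using fA p by (intro ninv_Un_left) auto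
      moreover have "ninv A (B \<union> (U - A - B)) = ninv A B + ninv A (U - A - B)"
        using fA p by (intro ninv_Un_right) auto
      ultimately have "ninv (A \<union> B) (U - A - B) + ninv A B = ninv A (U - A) + ninv B (U - A - B)"
        unfolding e2[symmetric] by simp
      then show "h1 ((\<lambda>(A, B). (A \<union> B, A)) p) = h2 p"
        unfolding h1_def h2_def p ksign_ninv
        by (simp add: e1 power_add[symmetric] mult_ac)
    qed auto
    also have "\<dots> = (\<Sum>A\<in>Pow U. \<Sum>B\<in>Pow (U - A). h2 (A, B))"
      using fin by (subst sum.Sigma) (auto intro: finite_subset)
    also have "\<dots> = wedge x (wedge y z) U"
      unfolding wedge_def h2_def by (simp add: sum_distrib_left sum_distrib_right mult_ac Diff_Un)
    finally show ?thesis .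
  qed
qed


lemma ksign_single1: "ksign {a} {b} = (if b < a then -1 else (1::'a::comm_ring_1))"
proof -
  have "{(i, j). i \<in> {a} \<and> j \<in> {b} \<and> j < i} = (if b < a then {(a, b)} else {})" by auto
  then show ?thesis by (simp add: ksign_def)
qed

lemma ksign_single: "a \<noteq> b \<Longrightarrow> ksign {a} {b} + (ksign {b} {a} :: 'a::comm_ring_1) = 0"
  by (simp add: ksign_single1)

lemma wedge_sq_zero:
  assumes v: "\<And>U. v U \<noteq> 0 \<Longrightarrow> card U = 1"
  shows "wedge v v = (\<lambda>_. (0::'a::comm_ring_1))"
proof (rule ext)
  fix U
  show "wedge v v U = 0"
  proof (cases "finite U")
    case False then show ?thesis by (simp add: wedge_infinite)
  next
    case fin: True
    show ?thesis
    proof (cases "U = {}")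
      case True
      have "v {} = 0" using v[of "{}"] by force
      then show ?thesis using True by (simp add: wedge_def)
    next
      case ne: False
      show ?thesis unfolding wedge_def
      proof (rule sum_involution_eq_0[where h = "\<lambda>S. U - S"])
        fix S assume S: "S \<in> Pow U"
        then have e: "U - (U - S) = S" by auto
        show "ksign (U - S) (U - (U - S)) * v (U - S) * v (U - (U - S)) +
              ksign S (U - S) * v S * v (U - S) = 0"
        proof (cases "v S = 0 \<or> v (U - S) = 0")
          case True then show ?thesis by (auto simp: e)
        next
          case False
          then have "card S = 1" "card (U - S) = 1" using v by auto
          then obtain a b where ab: "S = {a}" "U - S = {b}" by (meson card_1_singletonE)
          then have "a \<noteq> b" by auto
          have "ksign (U - S) S * v (U - S) * v S + ksign S (U - S) * v S * v (U - S)
                = (ksign {b} {a} + ksign {a} {b}) * (v S * v (U - S))"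
            using ab by (simp add: algebra_simps)
          also have "\<dots> = 0" using ksign_single[OF \<open>a \<noteq> b\<close>] by (metis add.commute mult_zero_left)
          finally show ?thesis by (simp add: e)
        qed
      next
        fix S assume "S \<in> Pow U" then show "U - S \<in> Pow U" by auto
      next
        fix S assume "S \<in> Pow U" then show "U - (U - S) = S" by auto
      next
        fix S assume "S \<in> Pow U" then show "U - S \<noteq> S" using ne by auto
      qed
    qed
  qed
qed

lemma wedge_anticomm:
  assumes v: "\<And>U. v U \<noteq> 0 \<Longrightarrow> card U = 1"
    and w: "\<And>U. w U \<noteq> 0 \<Longrightarrow> card U = 1"
  shows "wedge v w = (\<lambda>U. - wedge w (v::'a::comm_ring_1 kelt) U)"
proof -
  have vw: "\<And>U. v U + w U \<noteq> 0 \<Longrightarrow> card U = 1" using v w by (metis add.right_neutral add_0)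
  have "wedge (\<lambda>U. v U + w U) (\<lambda>U. v U + w U) = (\<lambda>_. 0)" by (rule wedge_sq_zero[OF vw])
  then have "\<And>U. wedge v v U + wedge v w U + (wedge w v U + wedge w w U) = 0"
    by (simp add: wedge_add_left wedge_add_right fun_eq_iff)
  moreover have "wedge v v = (\<lambda>_. 0)" using wedge_sq_zero[of v] v by blast
  moreover have "wedge w w = (\<lambda>_. 0)" using wedge_sq_zero[of w] w by blast
  ultimately have "\<And>U. wedge v w U + wedge w v U = 0"
    by (simp add: fun_eq_iff)
  then show ?thesis by (simp add: fun_eq_iff eq_neg_iff_add_eq_0)
qed

lemma wedge_nonzero:
  assumes "wedge x y U \<noteq> 0"
  obtains S where "S \<subseteq> U" "x S \<noteq> 0" "y (U - S) \<noteq> 0" "finite U"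
proof -
  have fin: "finite U" using assms wedge_infinite by metis
  obtain S where S: "S \<in> Pow U" "ksign S (U - S) * x S * y (U - S) \<noteq> 0"
    using assms unfolding wedge_def by (rule sum.not_neutral_contains_not_neutral)
  have "x S \<noteq> 0" "y (U - S) \<noteq> 0" using S(2) by auto
  moreover have "S \<subseteq> U" using S(1) by simp
  ultimately show ?thesis using that fin by blast
qed

lemma wedge_kelem: assumes "x \<in> kelem r" "y \<in> kelem r" shows "wedge x y \<in> kelem r"
  unfolding kelem_def
proof (intro CollectI allI impI)
  fix U assume "wedge x y U \<noteq> 0"
  then obtain S where S: "S \<subseteq> U" "x S \<noteq> 0" "y (U - S) \<noteq> 0" by (rule wedge_nonzero)
  have "S \<subseteq> {0..<r}" using assms(1) S(2) unfolding kelem_def by blast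
  moreover have "U - S \<subseteq> {0..<r}" using assms(2) S(3) unfolding kelem_def by blast
  ultimately show "U \<subseteq> {0..<r}" by blast
qed

lemma card_split: "finite U \<Longrightarrow> S \<subseteq> U \<Longrightarrow> card U = card S + card (U - S)"
proof -
  assume "finite U" "S \<subseteq> U"
  then have "S \<union> (U - S) = U" "finite S" "finite (U - S)" by (auto intro: finite_subset)
  then show ?thesis by (metis card_Un_disjoint Diff_disjoint)
qed

lemma wedge_kdeg: assumes "x \<in> kdeg r i" "y \<in> kdeg r j" shows "wedge x y \<in> kdeg r (i + j)"
  unfolding kdeg_def
proof (intro CollectI conjI allI impI)
  show "wedge x y \<in> kelem r" using assms by (simp add: kdeg_def wedge_kelem)
  fix U assume "wedge x y U \<noteq> 0"
  then obtain S where S: "S \<subseteq> U" "x S \<noteq> 0" "y (U - S) \<noteq> 0" "finite U" by (rule wedge_nonzero)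
  have "card S = i" using assms(1) S(2) unfolding kdeg_def by blast
  moreover have "card (U - S) = j" using assms(2) S(3) unfolding kdeg_def by blast
  ultimately show "card U = i + j" using card_split[OF S(4) S(1)] by simp
qed

lemma kd_add: "kd r f (\<lambda>U. x U + y U) = (\<lambda>T. kd r f x T + kd r f y T)"
  by (simp add: kd_def algebra_simps sum.distrib)

lemma kd_smult: "kd r f (\<lambda>U. c * x U) = (\<lambda>T. c * kd r f x T)"
  by (simp add: kd_def algebra_simps sum_distrib_left)

lemma kd_zero[simp]: "kd r f (\<lambda>_. 0) = (\<lambda>_. 0)"
  by (simp add: kd_def)

lemma kd_sc: "kd r f (sc c) = (\<lambda>_. 0)"
  by (simp add: kd_def sc_def)

lemma kd_top: "kd r f x {0..<r} = 0"
  by (simp add: kd_def)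

lemma kinv_kinv: "kinv (kinv x) = x"
  by (simp add: kinv_def fun_eq_iff power_mult_distrib[symmetric])

lemma kd_kinv: "kd r f (kinv x) T = kd r f x T \<or> kd r f (kinv x) T = - kd r f x T"
proof (cases "finite T")
  case True
  have "kd r f (kinv x) T = (\<Sum>i\<in>{0..<r} - T. - ((-1) ^ card T * ((-1) ^ card {j\<in>T. j < i} * f i * x (insert i T))))"
    unfolding kd_def kinv_def by (rule sum.cong) (use True in auto)
  also have "\<dots> = - ((-1) ^ card T * kd r f x T)"
    by (simp add: kd_def sum_negf sum_distrib_left)
  finally have e: "kd r f (kinv x) T = - ((-1) ^ card T * kd r f x T)" .
  show ?thesis
  proof (cases "even (card T)")
    case True then show ?thesis by (simp add: e)
  next
    case False then show ?thesis by (simp add: e)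
  qed
next
  case False
  have "kd r f (kinv x) T = kd r f x T"
    unfolding kd_def kinv_def by (rule sum.cong) (use False in auto)
  then show ?thesis by simp
qed

lemma kd_kd: "kd r f (kd r f x) = (\<lambda>_. 0)"
proof (rule ext)
  fix T
  define g where "g = (\<lambda>(i, k). (-1) ^ card {j\<in>T. j < i} * f i *
      ((-1) ^ card {j\<in>insert i T. j < k} * f k * x (insert k (insert i T))))"
  have "kd r f (kd r f x) T = (\<Sum>i\<in>{0..<r} - T. \<Sum>k\<in>{0..<r} - insert i T. g (i, k))"
    unfolding kd_def g_def by (simp add: sum_distrib_left)
  also have "\<dots> = (\<Sum>p\<in>Sigma ({0..<r} - T) (\<lambda>i. {0..<r} - insert i T). g p)"
    by (subst sum.Sigma) auto
  also have "\<dots> = 0"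
  proof (rule sum_involution_eq_0[where h = "\<lambda>(i, k). (k, i)"])
    fix p assume p: "p \<in> Sigma ({0..<r} - T) (\<lambda>i. {0..<r} - insert i T)"
    then obtain i k where ik: "p = (i, k)" "i \<notin> T" "k \<notin> T" "i \<noteq> k" by auto
    have x_eq: "insert i (insert k T) = insert k (insert i T)" by auto
    have gk: "g (k, i) = (-1) ^ (nlt T k) * f k * ((-1) ^ (nlt T i + (if k < i then 1 else 0)) * f i * x (insert k (insert i T)))"
      unfolding g_def case_prod_conv nlt_def[symmetric] nlt_insert[OF \<open>k \<notin> T\<close>] x_eq by (rule refl)
    have gi: "g (i, k) = (-1) ^ (nlt T i) * f i * ((-1) ^ (nlt T k + (if i < k then 1 else 0)) * f k * x (insert k (insert i T)))"
      unfolding g_def case_prod_conv nlt_def[symmetric] nlt_insert[OF \<open>i \<notin> T\<close>] by (rule refl)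
    have "g (k, i) + g (i, k) = ((-1) ^ (if k < i then 1 else 0) + (-1) ^ (if i < k then 1 else 0)) *
          ((-1) ^ (nlt T i + nlt T k) * f i * f k * x (insert k (insert i T)))"
      unfolding gk gi by (simp only: power_add algebra_simps)
    also have "\<dots> = 0" using \<open>i \<noteq> k\<close> by (cases "i < k") auto
    finally show "g ((\<lambda>(i, k). (k, i)) p) + g p = 0" using ik by simp
  qed auto
  finally show "kd r f (kd r f x) T = 0" .
qed


lemma sgn1:
  assumes "finite T" "S \<subseteq> T" "i \<notin> T"
  shows "(-1) ^ nlt T i * ksign (insert i S) (T - S) = ksign S (T - S) * ((-1::'a::comm_ring_1) ^ nlt S i)"
proof -
  have fS: "finite S" "i \<notin> S" using assms by (auto intro: finite_subset)
  have a: "ninv (insert i S) (T - S) = ninv S (T - S) + nlt (T - S) i" by (rule ninv_insert_left[OF fS])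
  have b: "nlt T i = nlt S i + nlt (T - S) i" by (rule nlt_split[OF assms(2)])
  show ?thesis unfolding ksign_ninv a b power_add[symmetric]
    by (rule m1_parity) presburger
qed

lemma sgn2:
  assumes "finite T" "S \<subseteq> T" "i \<notin> T"
  shows "(-1) ^ nlt T i * ksign S (insert i (T - S)) = ksign S (T - S) * (-1) ^ card S * ((-1::'a::comm_ring_1) ^ nlt (T - S) i)"
proof -
  have fS: "finite S" "i \<notin> S" using assms by (auto intro: finite_subset)
  have a: "ninv S (insert i (T - S)) = ninv S (T - S) + ngt S i"
    by (rule ninv_insert_right) (use assms fS in auto)
  have b: "nlt T i = nlt S i + nlt (T - S) i" by (rule nlt_split[OF assms(2)])
  have c: "card S = nlt S i + ngt S i" using nlt_ngt[OF fS] by simp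
  show ?thesis unfolding ksign_ninv a b c power_add[symmetric]
    by (rule m1_parity) presburger
qed

lemma sgn3:
  assumes "finite T" "S \<subseteq> T" "i \<in> T - S"
  shows "ksign (insert i S) (T - insert i S) * (-1) ^ card (insert i S) * (-1) ^ nlt (T - insert i S) i
       = - (ksign S (T - S) * ((-1::'a::comm_ring_1) ^ nlt S i))"
proof -
  have fS: "finite S" "i \<notin> S" using assms by (auto intro: finite_subset)
  have fB: "finite (T - insert i S)" using assms by auto
  have e: "T - S = insert i (T - insert i S)" using assms by auto
  have a: "ninv (insert i S) (T - insert i S) = ninv S (T - insert i S) + nlt (T - insert i S) i"
    by (rule ninv_insert_left[OF fS])
  have b: "ninv S (T - S) = ninv S (T - insert i S) + ngt S i"
    unfolding e by (rule ninv_insert_right) (use fS in auto)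
  have c: "card (insert i S) = Suc (nlt S i + ngt S i)" using nlt_ngt[OF fS] fS by simp
  have "- (ksign S (T - S) * ((-1::'a) ^ nlt S i)) = (-1) ^ (Suc (ninv S (T - insert i S) + ngt S i + nlt S i))"
    unfolding ksign_ninv b by (simp add: power_add)
  also have "\<dots> = (-1) ^ (ninv S (T - insert i S) + nlt (T - insert i S) i + Suc (nlt S i + ngt S i) + nlt (T - insert i S) i)"
    by (rule m1_parity) presburger
  finally show ?thesis unfolding ksign_ninv a c by (simp add: power_add)
qed

lemma wedge_insert:
  assumes "finite T" "i \<notin> T"
  shows "wedge x y (insert i T) =
     (\<Sum>S\<in>Pow T. ksign S (insert i (T - S)) * x S * y (insert i (T - S))) +
     (\<Sum>S\<in>Pow T. ksign (insert i S) (T - S) * x (insert i S) * y (T - S))"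
proof -
  have fin: "finite (Pow T)" "finite (insert i ` Pow T)" using assms by auto
  have dis: "Pow T \<inter> insert i ` Pow T = {}" using assms by auto
  have inj: "inj_on (insert i) (Pow T)"
  proof (rule inj_onI)
    fix A B assume "A \<in> Pow T" "B \<in> Pow T" "insert i A = insert i B"
    moreover have "i \<notin> A" "i \<notin> B" using calculation assms by auto
    ultimately show "A = B" by (metis Diff_insert_absorb)
  qed
  have "wedge x y (insert i T) = (\<Sum>S\<in>Pow T. ksign S (insert i T - S) * x S * y (insert i T - S)) +
        (\<Sum>S\<in>insert i ` Pow T. ksign S (insert i T - S) * x S * y (insert i T - S))"
    unfolding wedge_def Pow_insert by (rule sum.union_disjoint[OF fin dis])
  also have "(\<Sum>S\<in>insert i ` Pow T. ksign S (insert i T - S) * x S * y (insert i T - S))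
     = (\<Sum>S\<in>Pow T. ksign (insert i S) (insert i T - insert i S) * x (insert i S) * y (insert i T - insert i S))"
    by (rule sum.reindex[OF inj, unfolded comp_def])
  also have "\<dots> = (\<Sum>S\<in>Pow T. ksign (insert i S) (T - S) * x (insert i S) * y (T - S))"
    by (rule sum.cong) (use assms in auto)
  also have "(\<Sum>S\<in>Pow T. ksign S (insert i T - S) * x S * y (insert i T - S))
      = (\<Sum>S\<in>Pow T. ksign S (insert i (T - S)) * x S * y (insert i (T - S)))"
    by (intro sum.cong refl) (use assms in \<open>auto simp: insert_Diff_if\<close>)
  finally show ?thesis .
qed


lemma aux_add: "u + v = 0 \<Longrightarrow> a + b = (b + u) + (a + (v::'a::ab_group_add))"
proof -
  assume "u + v = 0"
  have "(b + u) + (a + v) = a + b + (u + v)" by (simp add: algebra_simps)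
  then show ?thesis using \<open>u + v = 0\<close> by simp
qed

lemma leibniz_fin:
  assumes fin: "finite T"
  shows "kd r f (wedge x y) T = wedge (kd r f x) y T + wedge (kinv x) (kd r f y) T"
proof -
  define R where "R = {0..<r}"
  define P1 where "P1 = (\<lambda>S i. (-1) ^ nlt T i * f i * (ksign S (insert i (T - S)) * x S * y (insert i (T - S))))"
  define P2 where "P2 = (\<lambda>S i. (-1) ^ nlt T i * f i * (ksign (insert i S) (T - S) * x (insert i S) * y (T - S)))"
  define Q1 where "Q1 = (\<lambda>S i. ksign S (T - S) * ((-1) ^ nlt S i * f i * x (insert i S)) * y (T - S))"
  define Q2 where "Q2 = (\<lambda>S i. ksign S (T - S) * ((-1) ^ card S * x S) * ((-1) ^ nlt (T - S) i * f i * y (insert i (T - S))))"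
  have finP: "finite (Pow T)" using fin by simp
  have L: "kd r f (wedge x y) T = (\<Sum>S\<in>Pow T. \<Sum>i\<in>R - T. P1 S i) + (\<Sum>S\<in>Pow T. \<Sum>i\<in>R - T. P2 S i)"
  proof -
    have "kd r f (wedge x y) T = (\<Sum>i\<in>R - T. (\<Sum>S\<in>Pow T. P1 S i) + (\<Sum>S\<in>Pow T. P2 S i))"
      unfolding kd_def R_def
    proof (intro sum.cong refl)
      fix i assume "i \<in> {0..<r} - T"
      then have "i \<notin> T" by simp
      show "(-1) ^ card {j \<in> T. j < i} * f i * wedge x y (insert i T) = (\<Sum>S\<in>Pow T. P1 S i) + (\<Sum>S\<in>Pow T. P2 S i)"
        unfolding wedge_insert[OF fin \<open>i \<notin> T\<close>] P1_def P2_def nlt_def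
        by (simp only: sum_distrib_left distrib_left)
    qed
    also have "\<dots> = (\<Sum>i\<in>R - T. \<Sum>S\<in>Pow T. P1 S i) + (\<Sum>i\<in>R - T. \<Sum>S\<in>Pow T. P2 S i)"
      by (rule sum.distrib)
    also have "\<dots> = (\<Sum>S\<in>Pow T. \<Sum>i\<in>R - T. P1 S i) + (\<Sum>S\<in>Pow T. \<Sum>i\<in>R - T. P2 S i)"
      by (simp only: sum.swap[where A = "R - T"])
    finally show ?thesis .
  qed
  have R1: "wedge (kd r f x) y T = (\<Sum>S\<in>Pow T. \<Sum>i\<in>R - T. Q1 S i) + (\<Sum>S\<in>Pow T. \<Sum>i\<in>(R \<inter> T) - S. Q1 S i)"
  proof -
    have "wedge (kd r f x) y T = (\<Sum>S\<in>Pow T. \<Sum>i\<in>R - S. Q1 S i)"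
      unfolding wedge_def kd_def R_def Q1_def nlt_def
      by (intro sum.cong refl) (simp only: sum_distrib_left sum_distrib_right)
    also have "\<dots> = (\<Sum>S\<in>Pow T. (\<Sum>i\<in>R - T. Q1 S i) + (\<Sum>i\<in>(R \<inter> T) - S. Q1 S i))"
    proof (intro sum.cong refl)
      fix S assume "S \<in> Pow T"
      then have e: "R - S = (R - T) \<union> ((R \<inter> T) - S)" by auto
      show "(\<Sum>i\<in>R - S. Q1 S i) = (\<Sum>i\<in>R - T. Q1 S i) + (\<Sum>i\<in>(R \<inter> T) - S. Q1 S i)"
        unfolding e by (rule sum.union_disjoint) (auto simp: R_def)
    qed
    also have "\<dots> = (\<Sum>S\<in>Pow T. \<Sum>i\<in>R - T. Q1 S i) + (\<Sum>S\<in>Pow T. \<Sum>i\<in>(R \<inter> T) - S. Q1 S i)"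
      by (rule sum.distrib)
    finally show ?thesis .
  qed
  have R2: "wedge (kinv x) (kd r f y) T = (\<Sum>S\<in>Pow T. \<Sum>i\<in>R - T. Q2 S i) + (\<Sum>S\<in>Pow T. \<Sum>i\<in>R \<inter> S. Q2 S i)"
  proof -
    have "wedge (kinv x) (kd r f y) T = (\<Sum>S\<in>Pow T. \<Sum>i\<in>R - (T - S). Q2 S i)"
      unfolding wedge_def kd_def R_def Q2_def nlt_def kinv_def
      by (intro sum.cong refl) (simp only: sum_distrib_left sum_distrib_right)
    also have "\<dots> = (\<Sum>S\<in>Pow T. (\<Sum>i\<in>R - T. Q2 S i) + (\<Sum>i\<in>R \<inter> S. Q2 S i))"
    proof (intro sum.cong refl)
      fix S assume "S \<in> Pow T"
      then have e: "R - (T - S) = (R - T) \<union> (R \<inter> S)" by auto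
      show "(\<Sum>i\<in>R - (T - S). Q2 S i) = (\<Sum>i\<in>R - T. Q2 S i) + (\<Sum>i\<in>R \<inter> S. Q2 S i)"
        unfolding e by (rule sum.union_disjoint) (use \<open>S \<in> Pow T\<close> in \<open>auto simp: R_def\<close>)
    qed
    also have "\<dots> = (\<Sum>S\<in>Pow T. \<Sum>i\<in>R - T. Q2 S i) + (\<Sum>S\<in>Pow T. \<Sum>i\<in>R \<inter> S. Q2 S i)"
      by (rule sum.distrib)
    finally show ?thesis .
  qed
  have c1: "P2 S i = Q1 S i" if "S \<in> Pow T" "i \<in> R - T" for S i
  proof -
    have "P2 S i = ((-1) ^ nlt T i * ksign (insert i S) (T - S)) * (f i * x (insert i S) * y (T - S))"
      unfolding P2_def by (simp only: mult_ac)
    also have "\<dots> = (ksign S (T - S) * (-1) ^ nlt S i) * (f i * x (insert i S) * y (T - S))"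
      using that fin by (subst sgn1) auto
    also have "\<dots> = Q1 S i" unfolding Q1_def by (simp only: mult_ac)
    finally show ?thesis .
  qed
  have c2: "P1 S i = Q2 S i" if "S \<in> Pow T" "i \<in> R - T" for S i
  proof -
    have "P1 S i = ((-1) ^ nlt T i * ksign S (insert i (T - S))) * (f i * x S * y (insert i (T - S)))"
      unfolding P1_def by (simp only: mult_ac)
    also have "\<dots> = (ksign S (T - S) * (-1) ^ card S * (-1) ^ nlt (T - S) i) * (f i * x S * y (insert i (T - S)))"
      using that fin by (subst sgn2) auto
    also have "\<dots> = Q2 S i" unfolding Q2_def by (simp only: mult_ac)
    finally show ?thesis .
  qed
  have X: "(\<Sum>S\<in>Pow T. \<Sum>i\<in>(R \<inter> T) - S. Q1 S i) + (\<Sum>S\<in>Pow T. \<Sum>i\<in>R \<inter> S. Q2 S i) = 0"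
  proof -
    have "(\<Sum>S\<in>Pow T. \<Sum>i\<in>R \<inter> S. Q2 S i) = (\<Sum>p\<in>Sigma (Pow T) (\<lambda>S. R \<inter> S). case_prod Q2 p)"
      by (rule sum.Sigma) (use fin in \<open>auto simp: R_def\<close>)
    also have "\<dots> = (\<Sum>p\<in>Sigma (Pow T) (\<lambda>S. (R \<inter> T) - S). - case_prod Q1 p)"
    proof (rule sum.reindex_bij_witness[where j = "\<lambda>(S, i). (S - {i}, i)" and i = "\<lambda>(S, i). (insert i S, i)"])
      fix p assume "p \<in> Sigma (Pow T) (\<lambda>S. R \<inter> S)"
      then obtain S i where p: "p = (S, i)" "S \<subseteq> T" "i \<in> R" "i \<in> S" by auto
      show "(\<lambda>(S, i). (insert i S, i)) ((\<lambda>(S, i). (S - {i}, i)) p) = p" using p by auto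
      show "(\<lambda>(S, i). (S - {i}, i)) p \<in> Sigma (Pow T) (\<lambda>S. (R \<inter> T) - S)" using p by auto
      have e1: "insert i (S - {i}) = S" using p by auto
      have e2: "T - (S - {i}) = insert i (T - S)" using p by auto
      have "Q2 S i = (ksign (insert i (S - {i})) (T - insert i (S - {i})) * (-1) ^ card (insert i (S - {i})) * (-1) ^ nlt (T - insert i (S - {i})) i)
              * (x S * f i * y (insert i (T - S)))"
        unfolding Q2_def e1 by (simp only: mult_ac)
      also have "\<dots> = - (ksign (S - {i}) (T - (S - {i})) * (-1) ^ nlt (S - {i}) i) * (x S * f i * y (insert i (T - S)))"
        using p fin by (subst sgn3) auto
      also have "\<dots> = - Q1 (S - {i}) i"
        unfolding Q1_def e1 e2 by (simp only: mult_ac mult_minus_left mult_minus_right)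
      finally show "- case_prod Q1 ((\<lambda>(S, i). (S - {i}, i)) p) = case_prod Q2 p" using p by simp
    next
      fix p assume "p \<in> Sigma (Pow T) (\<lambda>S. (R \<inter> T) - S)"
      then obtain S i where p: "p = (S, i)" "S \<subseteq> T" "i \<in> R" "i \<in> T" "i \<notin> S" by auto
      show "(\<lambda>(S, i). (S - {i}, i)) ((\<lambda>(S, i). (insert i S, i)) p) = p" using p by auto
      show "(\<lambda>(S, i). (insert i S, i)) p \<in> Sigma (Pow T) (\<lambda>S. R \<inter> S)" using p by auto
    qed
    also have "\<dots> = - (\<Sum>p\<in>Sigma (Pow T) (\<lambda>S. (R \<inter> T) - S). case_prod Q1 p)"
      by (simp add: sum_negf)
    also have "(\<Sum>p\<in>Sigma (Pow T) (\<lambda>S. (R \<inter> T) - S). case_prod Q1 p) = (\<Sum>S\<in>Pow T. \<Sum>i\<in>(R \<inter> T) - S. Q1 S i)"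
      by (rule sum.Sigma[symmetric]) (use fin in \<open>auto simp: R_def\<close>)
    finally show ?thesis by simp
  qed
  have E1: "(\<Sum>S\<in>Pow T. \<Sum>i\<in>R - T. P2 S i) = (\<Sum>S\<in>Pow T. \<Sum>i\<in>R - T. Q1 S i)"
    by (intro sum.cong refl c1)
  have E2: "(\<Sum>S\<in>Pow T. \<Sum>i\<in>R - T. P1 S i) = (\<Sum>S\<in>Pow T. \<Sum>i\<in>R - T. Q2 S i)"
    by (intro sum.cong refl c2)
  show ?thesis unfolding L R1 R2 E1 E2 by (rule aux_add[OF X])
qed

lemma leibniz: "kd r f (wedge x y) = (\<lambda>T. wedge (kd r f x) y T + wedge (kinv x) (kd r f y) T)"
proof (rule ext)
  fix T
  show "kd r f (wedge x y) T = wedge (kd r f x) y T + wedge (kinv x) (kd r f y) T"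
  proof (cases "finite T")
    case True then show ?thesis by (rule leibniz_fin)
  next
    case False then show ?thesis by (simp add: kd_def wedge_infinite)
  qed
qed


lemma sum_if_restrict:
  assumes "finite G" "F \<subseteq> G"
  shows "(\<Sum>x\<in>G. (if x \<in> F then k x else 0) * g x) = (\<Sum>x\<in>F. k x * (g x :: 'a::comm_ring_1))"
proof -
  have "(\<Sum>x\<in>G. (if x \<in> F then k x else 0) * g x) = (\<Sum>x\<in>G. if x \<in> F then k x * g x else 0)"
    by (rule sum.cong) auto
  also have "\<dots> = (\<Sum>x\<in>G \<inter> F. k x * g x)" by (rule sum.inter_restrict[symmetric]) (rule assms(1))
  also have "G \<inter> F = F" using assms(2) by auto
  finally show ?thesis .
qed

lemma rspan_zero: "0 \<in> rspan X"
  unfolding rspan_def by (rule CollectI, rule exI[of _ "{}"], auto)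

lemma rspan_base: "x \<in> X \<Longrightarrow> x \<in> rspan X"
  unfolding rspan_def by (rule CollectI, rule exI[of _ "{x}"], rule exI[of _ "\<lambda>_. 1"], auto)

lemma rspan_add: assumes "u \<in> rspan X" "v \<in> rspan X" shows "u + v \<in> rspan X"
proof -
  obtain F1 k1 where 1: "u = (\<Sum>x\<in>F1. k1 x * x)" "finite F1" "F1 \<subseteq> X" using assms(1) unfolding rspan_def by blast
  obtain F2 k2 where 2: "v = (\<Sum>x\<in>F2. k2 x * x)" "finite F2" "F2 \<subseteq> X" using assms(2) unfolding rspan_def by blast
  define k where "k = (\<lambda>x. (if x \<in> F1 then k1 x else 0) + (if x \<in> F2 then k2 x else 0))"
  have "(\<Sum>x\<in>F1 \<union> F2. k x * x) = (\<Sum>x\<in>F1 \<union> F2. (if x \<in> F1 then k1 x else 0) * x) + (\<Sum>x\<in>F1 \<union> F2. (if x \<in> F2 then k2 x else 0) * x)"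
    unfolding k_def by (simp add: distrib_right sum.distrib)
  also have "\<dots> = u + v" using 1 2 by (simp add: sum_if_restrict[where g = "\<lambda>x. x"])
  finally have "(\<Sum>x\<in>F1 \<union> F2. k x * x) = u + v" .
  then have "u + v = (\<Sum>x\<in>F1 \<union> F2. k x * x)" by simp
  then show ?thesis unfolding rspan_def using 1 2
    by (intro CollectI exI[of _ "F1 \<union> F2"] exI[of _ k]) auto
qed

lemma rspan_mult: assumes "u \<in> rspan X" shows "c * u \<in> rspan X"
proof -
  obtain F k where 1: "u = (\<Sum>x\<in>F. k x * x)" "finite F" "F \<subseteq> X" using assms(1) unfolding rspan_def by blast
  have "c * u = (\<Sum>x\<in>F. (c * k x) * x)" using 1 by (simp add: sum_distrib_left mult.assoc)
  then show ?thesis unfolding rspan_def using 1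
    by (intro CollectI exI[of _ F] exI[of _ "\<lambda>x. c * k x"]) auto
qed

lemma rspan_neg: "u \<in> rspan X \<Longrightarrow> - u \<in> rspan X"
  using rspan_mult[of u X "-1"] by simp

lemma rspan_sum: "finite F \<Longrightarrow> (\<And>p. p \<in> F \<Longrightarrow> g p \<in> rspan X) \<Longrightarrow> (\<Sum>p\<in>F. g p) \<in> rspan X"
  by (induction F rule: finite_induct) (auto intro: rspan_zero rspan_add)

lemma rspan_subset: assumes "X \<subseteq> rspan Y" shows "rspan X \<subseteq> rspan Y"
proof
  fix u assume "u \<in> rspan X"
  then obtain F k where 1: "u = (\<Sum>x\<in>F. k x * x)" "finite F" "F \<subseteq> X" unfolding rspan_def by blast
  show "u \<in> rspan Y" unfolding 1(1) using 1 assms by (intro rspan_sum rspan_mult) auto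
qed

lemma rspan_mono: "X \<subseteq> Y \<Longrightarrow> rspan X \<subseteq> rspan Y"
  by (rule rspan_subset) (auto intro: rspan_base)

lemma kspan_zero: "(\<lambda>_. 0) \<in> kspan X"
  unfolding kspan_def by (rule CollectI, rule exI[of _ "{}"], auto)

lemma kspan_base: "x \<in> X \<Longrightarrow> x \<in> kspan X"
  unfolding kspan_def by (rule CollectI, rule exI[of _ "{x}"], rule exI[of _ "\<lambda>_. 1"], auto)

lemma kspan_add: assumes "u \<in> kspan X" "v \<in> kspan X" shows "(\<lambda>U. u U + v U) \<in> kspan X"
proof -
  obtain F1 k1 where 1: "u = (\<lambda>U. \<Sum>x\<in>F1. k1 x * x U)" "finite F1" "F1 \<subseteq> X" using assms(1) unfolding kspan_def by blast
  obtain F2 k2 where 2: "v = (\<lambda>U. \<Sum>x\<in>F2. k2 x * x U)" "finite F2" "F2 \<subseteq> X" using assms(2) unfolding kspan_def by blast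
  define k where "k = (\<lambda>x. (if x \<in> F1 then k1 x else 0) + (if x \<in> F2 then k2 x else 0))"
  have "(\<lambda>U. \<Sum>x\<in>F1 \<union> F2. k x * x U) = (\<lambda>U. u U + v U)"
  proof (rule ext)
    fix U
    have "(\<Sum>x\<in>F1 \<union> F2. k x * x U) = (\<Sum>x\<in>F1 \<union> F2. (if x \<in> F1 then k1 x else 0) * x U) + (\<Sum>x\<in>F1 \<union> F2. (if x \<in> F2 then k2 x else 0) * x U)"
      unfolding k_def by (simp add: distrib_right sum.distrib)
    also have "\<dots> = u U + v U" using 1 2 by (simp add: sum_if_restrict[where g = "\<lambda>x. x U"])
    finally show "(\<Sum>x\<in>F1 \<union> F2. k x * x U) = u U + v U" .
  qed
  then show ?thesis unfolding kspan_def using 1 2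
    by (intro CollectI exI[of _ "F1 \<union> F2"] exI[of _ k]) auto
qed

lemma kspan_smult: assumes "u \<in> kspan X" shows "(\<lambda>U. c * u U) \<in> kspan X"
proof -
  obtain F k where 1: "u = (\<lambda>U. \<Sum>x\<in>F. k x * x U)" "finite F" "F \<subseteq> X" using assms(1) unfolding kspan_def by blast
  have "(\<lambda>U. c * u U) = (\<lambda>U. \<Sum>x\<in>F. (c * k x) * x U)" using 1 by (simp add: sum_distrib_left mult.assoc)
  then show ?thesis unfolding kspan_def using 1
    by (intro CollectI exI[of _ F] exI[of _ "\<lambda>x. c * k x"]) auto
qed

lemma kspan_sum: "finite F \<Longrightarrow> (\<And>p. p \<in> F \<Longrightarrow> g p \<in> kspan X) \<Longrightarrow> (\<lambda>U. \<Sum>p\<in>F. h p * g p U) \<in> kspan X"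
proof (induction F rule: finite_induct)
  case empty then show ?case by (simp add: kspan_zero)
next
  case (insert p F)
  have "(\<lambda>U. \<Sum>q\<in>insert p F. h q * g q U) = (\<lambda>U. h p * g p U + (\<Sum>q\<in>F. h q * g q U))"
    using insert by simp
  moreover have "(\<lambda>U. h p * g p U + (\<Sum>q\<in>F. h q * g q U)) \<in> kspan X"
    using insert by (intro kspan_add[where u = "\<lambda>U. h p * g p U"] kspan_smult) auto
  ultimately show ?case by simp
qed

lemma top_kspan: "(\<lambda>z. z P) ` kspan G = rspan ((\<lambda>z. z P) ` G)"
proof
  show "(\<lambda>z. z P) ` kspan G \<subseteq> rspan ((\<lambda>z. z P) ` G)"
  proof
    fix v assume "v \<in> (\<lambda>z. z P) ` kspan G"
    then obtain F k where 1: "v = (\<Sum>x\<in>F. k x * x P)" "finite F" "F \<subseteq> G" unfolding kspan_def by auto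
    show "v \<in> rspan ((\<lambda>z. z P) ` G)" unfolding 1(1) using 1
      by (intro rspan_sum rspan_mult rspan_base) auto
  qed
next
  show "rspan ((\<lambda>z. z P) ` G) \<subseteq> (\<lambda>z. z P) ` kspan G"
  proof
    fix v assume "v \<in> rspan ((\<lambda>z. z P) ` G)"
    then obtain F' k where 1: "v = (\<Sum>w\<in>F'. k w * w)" "finite F'" "F' \<subseteq> (\<lambda>z. z P) ` G" unfolding rspan_def by auto
    define g where "g = inv_into G (\<lambda>z. z P)"
    have g: "g w \<in> G \<and> g w P = w" if "w \<in> F'" for w
    proof -
      have w: "w \<in> (\<lambda>z. z P) ` G" using that 1(3) by auto
      show ?thesis unfolding g_def using inv_into_into[OF w] f_inv_into_f[OF w] by simp
    qed
    have inj: "inj_on g F'" by (rule inj_onI) (metis g)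
    define z where "z = (\<lambda>U. \<Sum>x\<in>g ` F'. k (x P) * x U)"
    have "z \<in> kspan G" unfolding z_def kspan_def using 1(2) g
      by (intro CollectI exI[of _ "g ` F'"] exI[of _ "\<lambda>x. k (x P)"]) auto
    moreover have "z P = v"
      unfolding z_def 1(1) by (simp add: sum.reindex[OF inj] g)
    ultimately show "v \<in> (\<lambda>z. z P) ` kspan G" by (metis image_eqI)
  qed
qed

lemma ideal_sum2: "ideal_sum {A, B} = rspan (A \<union> B)"
  by (simp add: ideal_sum_def)


lemma zeta_nonzero: "zeta r c j U \<noteq> 0 \<Longrightarrow> \<exists>i<r. U = {i}"
proof -
  assume "zeta r c j U \<noteq> 0"
  then obtain i where "i \<in> {..<r}" "(if U = {i} then c i j else 0) \<noteq> 0"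
    unfolding zeta_def by (rule sum.not_neutral_contains_not_neutral)
  then show ?thesis by (auto split: if_splits)
qed

lemma zeta_single: "i < r \<Longrightarrow> zeta r c j {i} = c i j"
proof -
  assume "i < r"
  have "zeta r c j {i} = (\<Sum>i'\<in>{..<r}. if i' = i then c i' j else 0)"
    unfolding zeta_def by (rule sum.cong) auto
  also have "\<dots> = c i j" using \<open>i < r\<close> by (subst sum.delta) auto
  finally show ?thesis .
qed

lemma zeta_card: "zeta r c j U \<noteq> 0 \<Longrightarrow> card U = 1"
proof -
  assume "zeta r c j U \<noteq> 0"
  then obtain i where "U = {i}" using zeta_nonzero by blast
  then show ?thesis by simp
qed

lemma fs_zeta: "fs (zeta r c j)"
  unfolding fs_def
proof (intro allI impI)
  fix U :: "nat set" assume "infinite U"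
  show "zeta r c j U = 0"
  proof (rule ccontr)
    assume "zeta r c j U \<noteq> 0"
    then obtain i where "U = {i}" using zeta_nonzero by blast
    then show False using \<open>infinite U\<close> by simp
  qed
qed

lemma zeta_kdeg: "zeta r c j \<in> kdeg r 1"
  unfolding kdeg_def kelem_def
proof (intro CollectI conjI allI impI)
  fix U assume "zeta r c j U \<noteq> 0"
  then obtain i where "i < r" "U = {i}" using zeta_nonzero by blast
  then show "U \<subseteq> {0..<r}" "card U = 1" by auto
qed

lemma kd_zeta: "kd r f (zeta r c j) T = (if T = {} then (\<Sum>i<r. c i j * f i) else 0)"
proof (cases "T = {}")
  case True
  have "kd r f (zeta r c j) T = (\<Sum>i\<in>{0..<r}. c i j * f i)"
    unfolding kd_def True by (rule sum.cong) (auto simp: zeta_single)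
  then show ?thesis using True by (simp add: atLeast0LessThan)
next
  case False
  have "kd r f (zeta r c j) T = (\<Sum>i\<in>{0..<r} - T. 0)"
    unfolding kd_def
  proof (rule sum.cong[OF refl])
    fix i assume "i \<in> {0..<r} - T"
    have "\<not> (\<exists>i'<r. insert i T = {i'})"
    proof
      assume "\<exists>i'<r. insert i T = {i'}"
      then obtain i' where e: "insert i T = {i'}" by blast
      then have "i = i'" "T \<subseteq> {i'}" by auto
      then have "T = {i}" using False by auto
      then show False using \<open>i \<in> {0..<r} - T\<close> by simp
    qed
    then have "zeta r c j (insert i T) = 0" using zeta_nonzero by blast
    then show "(-1) ^ card {j \<in> T. j < i} * f i * zeta r c j (insert i T) = 0" by simp
  qed
  then show ?thesis using False by simp
qed

lemma wedge_coef_left: "(\<And>S. u S \<in> rspan X) \<Longrightarrow> wedge u w U \<in> rspan X"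
proof (cases "finite U")
  case True
  assume u: "\<And>S. u S \<in> rspan X"
  have "wedge u w U = (\<Sum>S\<in>Pow U. (ksign S (U - S) * w (U - S)) * u S)"
    unfolding wedge_def by (simp only: mult_ac)
  also have "\<dots> \<in> rspan X" using True u by (intro rspan_sum rspan_mult) auto
  finally show ?thesis .
next
  case False then show ?thesis by (simp add: wedge_infinite rspan_zero)
qed

lemma wedge_coef_right: "(\<And>S. w S \<in> rspan X) \<Longrightarrow> wedge u w U \<in> rspan X"
proof (cases "finite U")
  case True
  assume w: "\<And>S. w S \<in> rspan X"
  have "wedge u w U = (\<Sum>S\<in>Pow U. (ksign S (U - S) * u S) * w (U - S))"
    unfolding wedge_def by (simp only: mult_ac)
  also have "\<dots> \<in> rspan X" using True w by (intro rspan_sum rspan_mult) auto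
  finally show ?thesis .
next
  case False then show ?thesis by (simp add: wedge_infinite rspan_zero)
qed

lemma Gamma_kd:
  assumes ha: "\<forall>j<s. a j = (\<Sum>i<r. c i j * f i)"
    and x: "x \<in> Gamma r s c"
  shows "kd r f x T \<in> rspan (a ` {..<s})"
proof -
  have "\<forall>T. kd r f x T \<in> rspan (a ` {..<s})"
    using x unfolding Gamma_def
  proof (induction rule: subalg.induct)
    case (gen g)
    then obtain j where j: "j < s" "g = zeta r c j" by auto
    show ?case
    proof
      fix T
      show "kd r f g T \<in> rspan (a ` {..<s})"
        using j ha by (auto simp: kd_zeta intro: rspan_base rspan_zero)
    qed
  next
    case (scalar c')
    show ?case using kd_sc[of r f c'] by (simp add: sc_def rspan_zero)
  next
    case (add x y)
    then show ?case by (simp add: kd_add rspan_add)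
  next
    case (smult x c')
    then show ?case by (simp add: kd_smult rspan_mult)
  next
    case (mult x y)
    show ?case
    proof
      fix T
      have "wedge (kd r f x) y T \<in> rspan (a ` {..<s})" using mult.IH(1) by (intro wedge_coef_left) auto
      moreover have "wedge (kinv x) (kd r f y) T \<in> rspan (a ` {..<s})" using mult.IH(2) by (intro wedge_coef_right) auto
      ultimately show "kd r f (wedge x y) T \<in> rspan (a ` {..<s})" by (simp add: leibniz rspan_add)
    qed
  qed
  then show ?thesis by blast
qed

lemma Gamma_wedge_kd:
  assumes ha: "\<forall>j<s. a j = (\<Sum>i<r. c i j * f i)"
    and x: "x \<in> Gamma r s c"
  shows "wedge x (kd r f w) {0..<r} \<in> rspan (a ` {..<s})"
proof -
  have "0 = kd r f (wedge (kinv x) w) {0..<r}" by (simp add: kd_top)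
  also have "\<dots> = wedge (kd r f (kinv x)) w {0..<r} + wedge x (kd r f w) {0..<r}"
    by (simp add: leibniz kinv_kinv)
  finally have e: "wedge x (kd r f w) {0..<r} = - wedge (kd r f (kinv x)) w {0..<r}"
    by (simp add: eq_neg_iff_add_eq_0 add.commute)
  have "\<And>S. kd r f (kinv x) S \<in> rspan (a ` {..<s})"
  proof -
    fix S
    have "kd r f x S \<in> rspan (a ` {..<s})" by (rule Gamma_kd[OF ha x])
    then show "kd r f (kinv x) S \<in> rspan (a ` {..<s})" using kd_kinv[of r f x S] rspan_neg by metis
  qed
  then have "wedge (kd r f (kinv x)) w {0..<r} \<in> rspan (a ` {..<s})" by (rule wedge_coef_left)
  then show ?thesis unfolding e by (rule rspan_neg)
qed

lemma Htilde_cycles: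
  assumes reps: "koszul_reps r f rep" and x: "x \<in> Htilde r f rep"
  shows "x \<in> kcycles r f"
  using x unfolding Htilde_def
proof (induction rule: subalg.induct)
  case (gen g)
  then show ?case using reps unfolding koszul_reps_def by blast
next
  case (scalar c')
  have "(\<lambda>U. if U = {} then c' else 0) \<in> kelem r" unfolding kelem_def by auto
  then show ?case using kd_sc[of r f c'] by (simp add: sc_def kcycles_def)
next
  case (add x y)
  have "(\<lambda>U. x U + y U) \<in> kelem r" unfolding kelem_def
  proof (intro CollectI allI impI)
    fix U assume "x U + y U \<noteq> 0"
    then have "x U \<noteq> 0 \<or> y U \<noteq> 0" by auto
    then show "U \<subseteq> {0..<r}" using add.IH unfolding kcycles_def kelem_def by blast
  qed
  then show ?case using add.IH by (simp add: kcycles_def kd_add)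
next
  case (smult x c')
  have "(\<lambda>U. c' * x U) \<in> kelem r" unfolding kelem_def
  proof (intro CollectI allI impI)
    fix U assume "c' * x U \<noteq> 0"
    then have "x U \<noteq> 0" by auto
    then show "U \<subseteq> {0..<r}" using smult.IH unfolding kcycles_def kelem_def by blast
  qed
  then show ?case using smult.IH by (simp add: kcycles_def kd_smult)
next
  case (mult x y)
  have "wedge x y \<in> kelem r" using mult.IH by (simp add: kcycles_def wedge_kelem)
  then show ?case using mult.IH by (simp add: kcycles_def leibniz)
qed


definition zprod :: "nat \<Rightarrow> (nat \<Rightarrow> nat \<Rightarrow> 'a::comm_ring_1) \<Rightarrow> nat list \<Rightarrow> 'a kelt" where
  "zprod r c L = foldr (\<lambda>j acc. wedge (zeta r c j) acc) L (sc 1)"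

lemma zprod_Nil[simp]: "zprod r c [] = sc 1" by (simp add: zprod_def)
lemma zprod_Cons[simp]: "zprod r c (j # L) = wedge (zeta r c j) (zprod r c L)" by (simp add: zprod_def)

lemma fs_zprod: "fs (zprod r c L)"
  by (cases L) (simp_all add: fs_sc fs_wedge)

lemma zprod_kdeg: "zprod r c L \<in> kdeg r (length L)"
proof (induction L)
  case Nil
  show ?case by (simp add: kdeg_def kelem_def sc_def)
next
  case (Cons j L)
  then show ?case using wedge_kdeg[OF zeta_kdeg Cons.IH] by simp
qed

lemma zprod_append: "zprod r c (L @ M) = wedge (zprod r c L) (zprod r c M)"
proof (induction L)
  case Nil
  show ?case by (simp add: wedge_sc_left[OF fs_zprod])
next
  case (Cons j L)
  then show ?case by (simp add: wedge_assoc)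
qed

lemma zprod_rep0:
  "wedge (zeta r c k) (foldr (\<lambda>j acc. wedge (zeta r c j) acc) B (wedge (zeta r c k) Y)) = (\<lambda>_. 0)"
proof (induction B)
  case Nil
  have "wedge (zeta r c k) (wedge (zeta r c k) Y) = wedge (wedge (zeta r c k) (zeta r c k)) Y"
    by (simp add: wedge_assoc)
  also have "\<dots> = (\<lambda>_. 0)" using wedge_sq_zero[of "zeta r c k"] zeta_card by (metis wedge_zero_left)
  finally show ?case by simp
next
  case (Cons b B)
  define Z where "Z = foldr (\<lambda>j acc. wedge (zeta r c j) acc) B (wedge (zeta r c k) Y)"
  have "wedge (zeta r c k) (wedge (zeta r c b) Z) = wedge (wedge (zeta r c k) (zeta r c b)) Z"
    by (simp add: wedge_assoc)
  also have "\<dots> = wedge (\<lambda>U. - wedge (zeta r c b) (zeta r c k) U) Z"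
    using wedge_anticomm[of "zeta r c k" "zeta r c b"] zeta_card by metis
  also have "\<dots> = (\<lambda>U. - wedge (zeta r c b) (wedge (zeta r c k) Z) U)"
    by (simp add: wedge_neg_left wedge_assoc)
  also have "\<dots> = (\<lambda>_. 0)" using Cons.IH unfolding Z_def by simp
  finally show ?case unfolding Z_def by simp
qed

lemma zprod_nondistinct: "\<not> distinct L \<Longrightarrow> zprod r c L = (\<lambda>_. 0)"
proof -
  assume "\<not> distinct L"
  then obtain xs k ys zs where L: "L = xs @ [k] @ ys @ [k] @ zs" using not_distinct_decomp by blast
  have "zprod r c ([k] @ ys @ [k] @ zs) = wedge (zeta r c k) (foldr (\<lambda>j acc. wedge (zeta r c j) acc) ys (wedge (zeta r c k) (zprod r c zs)))"
    by (simp add: zprod_def)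
  also have "\<dots> = (\<lambda>_. 0)" by (rule zprod_rep0)
  finally have "zprod r c ([k] @ ys @ [k] @ zs) = (\<lambda>_. 0)" .
  then show ?thesis unfolding L zprod_append[of r c xs] by simp
qed

definition PL :: "nat \<Rightarrow> nat \<Rightarrow> (nat \<Rightarrow> nat \<Rightarrow> 'a::comm_ring_1) \<Rightarrow> 'a kelt set" where
  "PL r s c = {zprod r c L | L. distinct L \<and> set L \<subseteq> {..<s}}"

lemma Gamma_kspan: "x \<in> Gamma r s c \<Longrightarrow> x \<in> kspan (PL r s c)"
  unfolding Gamma_def
proof (induction rule: subalg.induct)
  case (gen g)
  then obtain j where j: "j < s" "g = zeta r c j" by auto
  have gz: "g = zprod r c [j]" using j by (simp add: wedge_sc_right[OF fs_zeta])
  have "zprod r c [j] \<in> PL r s c" unfolding PL_def using j by (intro CollectI exI[of _ "[j]"]) simp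
  then show ?case unfolding gz by (rule kspan_base)
next
  case (scalar c')
  have "(\<lambda>U. if U = {} then c' else 0) = (\<lambda>U. \<Sum>p\<in>{zprod r c []}. c' * p U)" by (simp add: sc_def fun_eq_iff)
  moreover have "zprod r c [] \<in> PL r s c" unfolding PL_def by (intro CollectI exI[of _ "[]"]) simp
  then have "{zprod r c []} \<subseteq> PL r s c" by simp
  ultimately show ?case unfolding kspan_def
    by (intro CollectI exI[of _ "{zprod r c []}"] exI[of _ "\<lambda>_. c'"]) auto
next
  case (add x y)
  then show ?case using kspan_add by blast
next
  case (smult x c')
  then show ?case using kspan_smult by blast
next
  case (mult x y)
  obtain F k where x: "x = (\<lambda>U. \<Sum>p\<in>F. k p * p U)" "finite F" "F \<subseteq> PL r s c"
    using mult.IH(1) unfolding kspan_def by blast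
  obtain G k' where y: "y = (\<lambda>U. \<Sum>q\<in>G. k' q * q U)" "finite G" "G \<subseteq> PL r s c"
    using mult.IH(2) unfolding kspan_def by blast
  have pq: "wedge p q \<in> kspan (PL r s c)" if pqP: "p \<in> PL r s c" "q \<in> PL r s c" for p q
  proof -
    obtain L where L: "p = zprod r c L" "set L \<subseteq> {..<s}"
      using pqP(1) unfolding PL_def by blast
    obtain M where M: "q = zprod r c M" "set M \<subseteq> {..<s}"
      using pqP(2) unfolding PL_def by blast
    have LM: "p = zprod r c L" "q = zprod r c M" "set L \<subseteq> {..<s}" "set M \<subseteq> {..<s}"
      using L M by auto
    have e: "wedge p q = zprod r c (L @ M)" using LM by (simp add: zprod_append)
    show ?thesis
    proof (cases "distinct (L @ M)")
      case True
      then have "zprod r c (L @ M) \<in> PL r s c" unfolding PL_def using LM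
        by (intro CollectI exI[of _ "L @ M"]) simp
      then show ?thesis unfolding e by (rule kspan_base)
    next
      case False
      then show ?thesis unfolding e by (simp add: zprod_nondistinct kspan_zero)
    qed
  qed
  have "wedge x y = (\<lambda>U. \<Sum>p\<in>F. k p * wedge p y U)" unfolding x(1) by (rule wedge_sum_left)
  moreover have "wedge p y \<in> kspan (PL r s c)" if pF: "p \<in> F" for p
  proof -
    have "wedge p y = (\<lambda>U. \<Sum>q\<in>G. k' q * wedge p q U)" unfolding y(1) by (rule wedge_sum_right)
    moreover have "(\<lambda>U. \<Sum>q\<in>G. k' q * wedge p q U) \<in> kspan (PL r s c)"
      using y x(3) pF by (intro kspan_sum pq) auto
    ultimately show ?thesis by simp
  qed
  then have "(\<lambda>U. \<Sum>p\<in>F. k p * wedge p y U) \<in> kspan (PL r s c)"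
    using x by (intro kspan_sum) auto
  ultimately show ?case by simp
qed

lemma Gamma_high_zero:
  assumes x: "x \<in> Gamma r s c" "x \<in> kdeg r j" and js: "s < j"
  shows "x = (\<lambda>_. 0)"
proof (rule ext, rule ccontr)
  fix U assume nz: "x U \<noteq> 0"
  have "\<forall>S. x S \<noteq> 0 \<longrightarrow> card S = j" using x(2) unfolding kdeg_def by simp
  then have cU: "card U = j" using nz by simp
  obtain F k where F: "x = (\<lambda>U. \<Sum>p\<in>F. k p * p U)" "finite F" "F \<subseteq> PL r s c"
    using Gamma_kspan[OF x(1)] unfolding kspan_def by blast
  have "p U = 0" if pF: "p \<in> F" for p
  proof -
    obtain L where L: "p = zprod r c L" "distinct L" "set L \<subseteq> {..<s}"
      using pF F(3) unfolding PL_def by blast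
    have "length L = card (set L)" using L(2) by (simp add: distinct_card)
    also have "\<dots> \<le> card {..<s}" by (rule card_mono[OF finite_lessThan L(3)])
    also have "\<dots> = s" by simp
    finally have "length L \<noteq> card U" using cU js by simp
    moreover have "\<forall>S. zprod r c L S \<noteq> 0 \<longrightarrow> card S = length L"
      using zprod_kdeg[of r c L] unfolding kdeg_def by simp
    ultimately show "p U = 0" using L(1) by metis
  qed
  then have "\<forall>p\<in>F. k p * p U = 0" by (metis mult_zero_right)
  then have "x U = 0" unfolding F(1) by (rule sum.neutral)
  then show False using nz by simp
qed

definition etop :: "nat \<Rightarrow> 'a::comm_ring_1 kelt" where
  "etop r = (\<lambda>U. if U = {0..<r} then 1 else 0)"

lemma kd_etop_kdeg: "kd r f (etop r) \<in> kdeg r (r - 1)"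
  unfolding kdeg_def kelem_def
proof (intro CollectI conjI allI impI)
  fix T assume "kd r f (etop r) T \<noteq> 0"
  then obtain i where i: "i \<in> {0..<r} - T" "(-1) ^ card {j \<in> T. j < i} * f i * etop r (insert i T) \<noteq> 0"
    unfolding kd_def by (rule sum.not_neutral_contains_not_neutral)
  then have e: "insert i T = {0..<r}" unfolding etop_def by (auto split: if_splits)
  then have "T = {0..<r} - {i}" using i(1) by auto
  then show "T \<subseteq> {0..<r}" "card T = r - 1" using i(1) by auto
qed

lemma wedge_etop_top: "wedge u (etop r) {0..<r} = u {}"
proof -
  have "wedge u (etop r) {0..<r} = (\<Sum>S\<in>Pow {0..<r}. if S = {} then ksign S ({0..<r} - S) * u S else 0)"
    unfolding wedge_def etop_def by (rule sum.cong) auto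
  also have "\<dots> = ksign {} {0..<r} * u {}" by (subst sum.delta) auto
  finally show ?thesis by (simp add: ksign_def)
qed

lemma kd_kinv_zeta: "kd r f (kinv (zeta r c j)) {} = - (\<Sum>i<r. c i j * f i)"
proof -
  have "kd r f (kinv (zeta r c j)) {} = (\<Sum>i\<in>{0..<r}. - (c i j * f i))"
    unfolding kd_def kinv_def by (rule sum.cong) (auto simp: zeta_single)
  then show ?thesis by (simp add: atLeast0LessThan sum_negf)
qed

lemma a_in_kitt:
  assumes ha: "\<forall>j<s. a j = (\<Sum>i<r. c i j * f i)" and j: "j < s"
  shows "a j \<in> rspan {wedge x y {0..<r} | x y j. j \<le> r \<and> x \<in> Gamma r s c \<inter> kdeg r j \<and> y \<in> kcycles r f \<inter> kdeg r (r - j)}"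
proof (cases "r = 0")
  case True
  then have "a j = 0" using ha j by simp
  then show ?thesis by (simp add: rspan_zero)
next
  case False
  have "0 = kd r f (wedge (kinv (zeta r c j)) (etop r)) {0..<r}" by (simp add: kd_top)
  also have "\<dots> = wedge (kd r f (kinv (zeta r c j))) (etop r) {0..<r} + wedge (zeta r c j) (kd r f (etop r)) {0..<r}"
    by (simp add: leibniz kinv_kinv)
  also have "\<dots> = - a j + wedge (zeta r c j) (kd r f (etop r)) {0..<r}"
    by (simp add: wedge_etop_top kd_kinv_zeta ha j)
  finally have e: "a j = wedge (zeta r c j) (kd r f (etop r)) {0..<r}"
    by (simp add: eq_neg_iff_add_eq_0 add.commute)
  have "zeta r c j \<in> Gamma r s c \<inter> kdeg r 1" using j zeta_kdeg[of r c j] unfolding Gamma_def by (auto intro: subalg.gen)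
  moreover have "kd r f (etop r) \<in> kcycles r f \<inter> kdeg r (r - 1)"
    using kd_etop_kdeg[of r f] by (simp add: kcycles_def kd_kd kdeg_def)
  moreover have "1 \<le> r" using False by simp
  ultimately have "a j \<in> {wedge x y {0..<r} | x y j. j \<le> r \<and> x \<in> Gamma r s c \<inter> kdeg r j \<and> y \<in> kcycles r f \<inter> kdeg r (r - j)}"
    unfolding e by blast
  then show ?thesis by (rule rspan_base)
qed


lemma kgrade_le:
  assumes "i \<le> r" "koszul_H_nonzero r f i"
  shows "enat i + kgrade r f \<le> enat r"
proof -
  define M where "M = {i. i \<le> r \<and> koszul_H_nonzero r f i}"
  have ex: "\<exists>i\<le>r. koszul_H_nonzero r f i" using assms by blast
  have fM: "finite M" unfolding M_def by (rule finite_subset[of _ "{..r}"]) auto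
  have iM: "i \<in> M" unfolding M_def using assms by simp
  have "i \<le> Max M" using fM iM by simp
  moreover have "Max M \<in> M" using fM iM by (intro Max_in) auto
  then have "Max M \<le> r" unfolding M_def by simp
  moreover have "kgrade r f = enat (r - Max M)" unfolding kgrade_def M_def using ex by simp
  ultimately show ?thesis by simp
qed

theorem theorem4p22:
  fixes f a :: "nat \<Rightarrow> 'a::comm_ring_1" and c :: "nat \<Rightarrow> nat \<Rightarrow> 'a"
    and r s :: nat and rep :: "nat \<Rightarrow> 'a kelt \<Rightarrow> 'a kelt"
  assumes "\<forall>j<s. a j = (\<Sum>i<r. c i j * f i)"
    and "koszul_reps r f rep"
  shows "kitt r s c f
           = ideal_sum {rspan (a ` {..<s}), top_ideal r (Gamma r s c) (Htilde r f rep)}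
       \<and> ideal_sum {rspan (a ` {..<s}), top_ideal r (Gamma r s c) (Htilde r f rep)}
           = ideal_sum ({rspan (a ` {..<s})} \<union>
               {top_ideal_deg r (Gamma r s c) (Htilde r f rep) (r - i) | i.
                  r - s \<le> i \<and> enat i + kgrade r f \<le> enat r})"
proof -
  note ha = assms(1) and reps = assms(2)
  define J where "J = rspan (a ` {..<s})"
  define Gm where "Gm = Gamma r s c"
  define Hs where "Hs = Htilde r f rep"
  define GK where "GK = {wedge x y {0..<r} | x y j. j \<le> r \<and> x \<in> Gm \<inter> kdeg r j \<and> y \<in> kcycles r f \<inter> kdeg r (r - j)}"
  define GH where "GH = {wedge x y {0..<r} | x y j. j \<le> r \<and> x \<in> Gm \<inter> kdeg r j \<and> y \<in> Hs \<inter> kdeg r (r - j)}"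
  define Gi where "Gi = (\<lambda>i. {wedge x y {0..<r} | x y. x \<in> Gm \<inter> kdeg r (r - i) \<and> y \<in> Hs \<inter> kdeg r (r - (r - i))})"
  define D where "D = {top_ideal_deg r (Gamma r s c) (Htilde r f rep) (r - i) | i. r - s \<le> i \<and> enat i + kgrade r f \<le> enat r}"
  have kittE: "kitt r s c f = rspan GK"
  proof -
    have "(\<lambda>z. z {0..<r}) ` {wedge x y | x y j. j \<le> r \<and> x \<in> Gm \<inter> kdeg r j \<and> y \<in> kcycles r f \<inter> kdeg r (r - j)} = GK"
      unfolding GK_def by blast
    then show ?thesis unfolding kitt_def top_ideal_def Gm_def top_kspan by simp
  qed
  have topH: "top_ideal r (Gamma r s c) (Htilde r f rep) = rspan GH"
  proof -
    have "(\<lambda>z. z {0..<r}) ` {wedge x y | x y j. j \<le> r \<and> x \<in> Gm \<inter> kdeg r j \<and> y \<in> Hs \<inter> kdeg r (r - j)} = GH"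
      unfolding GH_def by blast
    then show ?thesis unfolding top_ideal_def Gm_def Hs_def top_kspan by simp
  qed
  have topD: "top_ideal_deg r (Gamma r s c) (Htilde r f rep) (r - i) = rspan (Gi i)" for i
  proof -
    have "(\<lambda>z. z {0..<r}) ` {wedge x y | x y. x \<in> Gm \<inter> kdeg r (r - i) \<and> y \<in> Hs \<inter> kdeg r (r - (r - i))} = Gi i"
      unfolding Gi_def by blast
    then show ?thesis unfolding top_ideal_deg_def Gm_def Hs_def top_kspan by simp
  qed
  have D_eq: "D = {rspan (Gi i) | i. r - s \<le> i \<and> enat i + kgrade r f \<le> enat r}"
    unfolding D_def topD by simp
  have S1: "ideal_sum {rspan (a ` {..<s}), top_ideal r (Gamma r s c) (Htilde r f rep)} = rspan (J \<union> rspan GH)"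
    unfolding ideal_sum2 topH J_def by simp
  have S2: "ideal_sum ({rspan (a ` {..<s})} \<union> D) = rspan (J \<union> \<Union>D)"
    unfolding ideal_sum_def J_def by simp
  have HsZ: "Hs \<subseteq> kcycles r f" unfolding Hs_def using Htilde_cycles[OF reps] by blast
  have GwJ: "wedge x (kd r f w) {0..<r} \<in> J" if "x \<in> Gm" for x w
    unfolding J_def using Gamma_wedge_kd[OF ha] that unfolding Gm_def by blast
  have C1a: "rspan GK \<subseteq> rspan (J \<union> rspan GH)"
  proof (rule rspan_subset, rule subsetI)
    fix v assume "v \<in> GK"
    then obtain x y j where v: "v = wedge x y {0..<r}" "j \<le> r" "x \<in> Gm" "x \<in> kdeg r j"
      "y \<in> kcycles r f" "y \<in> kdeg r (r - j)" unfolding GK_def by blast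
    have yy: "y \<in> kdeg r (r - j) \<inter> kcycles r f" using v by simp
    have R: "rep (r - j) y \<in> kdeg r (r - j) \<inter> kcycles r f" "(\<lambda>U. y U - rep (r - j) y U) \<in> kbound r f (r - j)"
      using reps[unfolded koszul_reps_def, rule_format, OF yy] by blast+
    obtain w where w: "(\<lambda>U. y U - rep (r - j) y U) = kd r f w" using R(2) unfolding kbound_def by blast
    have ye: "y = (\<lambda>U. rep (r - j) y U + kd r f w U)"
    proof (rule ext)
      fix U
      have "y U - rep (r - j) y U = kd r f w U" using fun_cong[OF w, of U] by simp
      then show "y U = rep (r - j) y U + kd r f w U" by (simp add: algebra_simps)
    qed
    have ve: "v = wedge x (rep (r - j) y) {0..<r} + wedge x (kd r f w) {0..<r}"
      unfolding v(1) by (subst ye) (simp add: wedge_add_right)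
    have "rep (r - j) y \<in> Hs" unfolding Hs_def Htilde_def using yy by (blast intro: subalg.gen)
    then have "wedge x (rep (r - j) y) {0..<r} \<in> GH" unfolding GH_def using v R(1) by blast
    then have 1: "wedge x (rep (r - j) y) {0..<r} \<in> rspan (J \<union> rspan GH)"
      by (intro rspan_base) (auto intro: rspan_base)
    have 2: "wedge x (kd r f w) {0..<r} \<in> rspan (J \<union> rspan GH)"
      using GwJ[OF v(3)] by (intro rspan_base) auto
    show "v \<in> rspan (J \<union> rspan GH)" unfolding ve using 1 2 by (rule rspan_add)
  qed
  have C1b: "rspan (J \<union> rspan GH) \<subseteq> rspan GK"
  proof (rule rspan_subset)
    have "J \<subseteq> rspan GK" unfolding J_def
      by (rule rspan_subset) (use a_in_kitt[OF ha] in \<open>auto simp: GK_def Gm_def\<close>)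
    moreover have "GH \<subseteq> GK" unfolding GH_def GK_def using HsZ by blast
    then have "rspan GH \<subseteq> rspan GK" by (rule rspan_mono)
    ultimately show "J \<union> rspan GH \<subseteq> rspan GK" by blast
  qed
  have C2b: "rspan (J \<union> \<Union>D) \<subseteq> rspan (J \<union> rspan GH)"
  proof (rule rspan_subset)
    have "J \<subseteq> rspan (J \<union> rspan GH)" by (auto intro: rspan_base)
    moreover have "rspan (Gi i) \<subseteq> rspan (J \<union> rspan GH)" for i
    proof -
      have "Gi i \<subseteq> GH"
      proof
        fix v assume "v \<in> Gi i"
        then obtain x y where v: "v = wedge x y {0..<r}" "x \<in> Gm \<inter> kdeg r (r - i)" "y \<in> Hs \<inter> kdeg r (r - (r - i))"
          unfolding Gi_def by blast
        show "v \<in> GH" unfolding GH_def using v by (intro CollectI exI[of _ x] exI[of _ y] exI[of _ "r - i"]) simp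
      qed
      then have "rspan (Gi i) \<subseteq> rspan GH" by (rule rspan_mono)
      also have "\<dots> \<subseteq> rspan (J \<union> rspan GH)" by (rule rspan_mono) (auto intro: rspan_base)
      finally show ?thesis .
    qed
    then have "\<Union>D \<subseteq> rspan (J \<union> rspan GH)" unfolding D_eq by blast
    ultimately show "J \<union> \<Union>D \<subseteq> rspan (J \<union> rspan GH)" by blast
  qed
  have C2a: "rspan (J \<union> rspan GH) \<subseteq> rspan (J \<union> \<Union>D)"
  proof (rule rspan_subset)
    have "J \<subseteq> rspan (J \<union> \<Union>D)" by (auto intro: rspan_base)
    moreover have "GH \<subseteq> rspan (J \<union> \<Union>D)"
    proof
      fix v assume "v \<in> GH"
      then obtain x y j where v: "v = wedge x y {0..<r}" "j \<le> r" "x \<in> Gm" "x \<in> kdeg r j"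
        "y \<in> Hs" "y \<in> kdeg r (r - j)" unfolding GH_def by blast
      show "v \<in> rspan (J \<union> \<Union>D)"
      proof (cases "s < j")
        case True
        have "x = (\<lambda>_. 0)" using Gamma_high_zero[of x r s c j] v True unfolding Gm_def by blast
        then show ?thesis using v(1) by (simp add: rspan_zero)
      next
        case js: False
        show ?thesis
        proof (cases "koszul_H_nonzero r f (r - j)")
          case False
          have "y \<in> kdeg r (r - j) \<inter> kcycles r f" using v HsZ by blast
          then have "y \<in> kbound r f (r - j)" using False unfolding koszul_H_nonzero_def by blast
          then obtain w where "y = kd r f w" unfolding kbound_def by blast
          then have "v \<in> J" using GwJ[OF v(3)] v(1) by simp
          then show ?thesis by (intro rspan_base) auto
        next
          case True
          define i where "i = r - j"
          have ci: "r - s \<le> i \<and> enat i + kgrade r f \<le> enat r"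
            unfolding i_def using js True kgrade_le[of "r - j" r f] by simp
          have "v \<in> Gi i" unfolding Gi_def i_def using v
            by (intro CollectI exI[of _ x] exI[of _ y]) simp
          then have "v \<in> rspan (Gi i)" by (rule rspan_base)
          moreover have "rspan (Gi i) \<in> D" unfolding D_eq using ci by blast
          ultimately have "v \<in> \<Union>D" by blast
          then show ?thesis by (intro rspan_base) auto
        qed
      qed
    qed
    then have "rspan GH \<subseteq> rspan (J \<union> \<Union>D)" by (rule rspan_subset)
    ultimately show "J \<union> rspan GH \<subseteq> rspan (J \<union> \<Union>D)" by blast
  qed
  show ?thesis unfolding kittE S1 D_def[symmetric] S2 using C1a C1b C2a C2b by blast
qed

end
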